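(* Let $b\in\overline{\mathbb{Q}}\setminus\{0,1\}$ with a fixed logarithm $\ln b$. If there is a ladder to $\xi\in\mathbb{C}$ (with respect to $b$), then there is a ladder $a_1,\dots,a_m$ to $\xi$ (obtainable as a subsequence of the given one) such that $1,a_1,\dots,a_m$ are linearly independent over $\mathbb{Q}$.
   Context: $b^x:=e^{x\ln b}$ for the fixed nonzero value $\ln b$. $\overline{F}$ denotes the algebraic closure in $\mathbb{C}$ of a field $F$; $\overline{\mathbb{Q}}$ is the field of algebraic numbers. Ladder: for $a_1,\dots,a_m\in\mathbb{C}$ put $F_0:=\mathbb{Q}$ and $F_k:=\mathbb{Q}(a_1,\dots,a_k,b^{a_1},\dots,b^{a_k})$. The sequence is a ladder if for every $1\le k\le m$, $a_k\in\overline{F_{k-1}}$ or $b^{a_k}\in\overline{F_{k-1}}$; it is a ladder to $\xi$ if $\xi\in\overline{F_m}$. A ladder with $1,a_1,\dots,a_m$ linearly independent over $\mathbb{Q}$ is called reduced. *)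

theory Defs
  imports Complex_Main "HOL-Computational_Algebra.Polynomial" "HOL-Library.Sublist"
begin

text \<open>b^x := exp (x * ln b), for the fixed value lnb of the logarithm of b.\<close>
definition bpow :: "complex \<Rightarrow> complex \<Rightarrow> complex" where
  "bpow lnb x = exp (x * lnb)"

definition is_subfield :: "complex set \<Rightarrow> bool" where
  "is_subfield K \<longleftrightarrow> 0 \<in> K \<and> 1 \<in> K \<and>
     (\<forall>x\<in>K. \<forall>y\<in>K. x + y \<in> K \<and> x - y \<in> K \<and> x * y \<in> K) \<and>
     (\<forall>x\<in>K. x \<noteq> 0 \<longrightarrow> inverse x \<in> K)"

definition field_gen :: "complex set \<Rightarrow> complex set" where
  "field_gen S = \<Inter> {K. is_subfield K \<and> S \<subseteq> K}"

definition alg_closure :: "complex set \<Rightarrow> complex set" where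
  "alg_closure F = {z. \<exists>p::complex poly. p \<noteq> 0 \<and> (\<forall>i. coeff p i \<in> F) \<and> poly p z = 0}"

text \<open>F_k = Q(a_1,...,a_k, b^a_1,...,b^a_k) for the list as = [a_1,...,a_m] (0-indexed).\<close>
definition ladder_field :: "complex \<Rightarrow> complex list \<Rightarrow> nat \<Rightarrow> complex set" where
  "ladder_field lnb as k =
     field_gen ({as ! i | i. i < k} \<union> {bpow lnb (as ! i) | i. i < k})"

definition is_ladder :: "complex \<Rightarrow> complex list \<Rightarrow> bool" where
  "is_ladder lnb as \<longleftrightarrow>
     (\<forall>k < length as. as ! k \<in> alg_closure (ladder_field lnb as k)
                    \<or> bpow lnb (as ! k) \<in> alg_closure (ladder_field lnb as k))"

definition ladder_to :: "complex \<Rightarrow> complex list \<Rightarrow> complex \<Rightarrow> bool" where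
  "ladder_to lnb as \<xi> \<longleftrightarrow> is_ladder lnb as \<and> \<xi> \<in> alg_closure (ladder_field lnb as (length as))"

definition one_lin_indep_Q :: "complex list \<Rightarrow> bool" where
  "one_lin_indep_Q as \<longleftrightarrow>
     (\<forall>(c0::rat) (c::nat \<Rightarrow> rat).
        of_rat c0 + (\<Sum>i<length as. of_rat (c i) * as ! i) = (0::complex)
        \<longrightarrow> c0 = 0 \<and> (\<forall>i<length as. c i = 0))"

end

theory Submission imports Defs "HOL-Algebra.Algebraic_Closure_Type" begin

abbreviation CR :: "complex ring" where "CR \<equiv> ring_of_type_algebra"

lemma field_CR: "field CR" by rule
interpretation CR: domain CR using field_CR field.axioms(1) by blast

lemma CR_simps [simp]:
  "carrier CR = UNIV" "x \<otimes>\<^bsub>CR\<^esub> y = x * y" "x \<oplus>\<^bsub>CR\<^esub> y = x + y"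
  "\<zero>\<^bsub>CR\<^esub> = 0" "\<one>\<^bsub>CR\<^esub> = 1"
  by (auto simp: ring_of_type_algebra_def)

lemma CR_minus [simp]: "\<ominus>\<^bsub>CR\<^esub> x = - x"
  by (rule CR.minus_equality) auto

lemma CR_pow [simp]: "x [^]\<^bsub>CR\<^esub> (n::nat) = x ^ n"
  by (induction n) (auto simp: ring_of_type_algebra_def)

lemma CR_inv [simp]: "x \<noteq> 0 \<Longrightarrow> inv\<^bsub>CR\<^esub> x = inverse x"
  by (rule CR.inv_unique'[symmetric]) auto

lemma subfield_imp: "subfield K CR \<Longrightarrow> is_subfield K"
proof -
  assume K: "subfield K CR"
  have r: "subring K CR" using subfieldE(1)[OF K] .
  have inv: "x \<in> K \<Longrightarrow> x \<noteq> 0 \<Longrightarrow> inverse x \<in> K" for x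
    using CR.subfield_m_inv(1)[OF K, of x] by simp
  have "x \<in> K \<Longrightarrow> y \<in> K \<Longrightarrow> x - y \<in> K" for x y
    using subringE(5,7)[OF r] by (metis CR_minus CR_simps(3) diff_conv_add_uminus)
  then show ?thesis unfolding is_subfield_def
    using subringE(2,3,6,7)[OF r] inv by auto
qed

lemma imp_subfield: "is_subfield K \<Longrightarrow> subfield K CR"
proof -
  assume K: "is_subfield K"
  show "subfield K CR"
  proof (rule field.subfieldI'[OF field_CR CR.subringI])
    fix h assume "h \<in> K" then show "\<ominus>\<^bsub>CR\<^esub> h \<in> K" using K unfolding is_subfield_def
      by (metis CR_minus diff_0)
  qed (use K in \<open>auto simp: is_subfield_def\<close>)
qed

lemma subfield_iff: "subfield K CR \<longleftrightarrow> is_subfield K"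
  using subfield_imp imp_subfield by blast

lemma eval_CR: "CR.eval p x = poly (Poly (rev p)) x"
  by (induction p) (auto simp: Poly_append poly_monom algebra_simps)

lemma alg_imp_CR:
  assumes "z \<in> alg_closure K" shows "(CR.algebraic over K) z"
proof -
  obtain p where p: "p \<noteq> 0" "\<forall>i. Polynomial.coeff p i \<in> K" "poly p z = 0"
    using assms unfolding alg_closure_def by blast
  define l where "l = rev (coeffs p)"
  have ne: "l \<noteq> []" using p(1) by (simp add: l_def)
  have "set l \<subseteq> K" using p(2) by (auto simp: l_def coeffs_def)
  moreover have "hd l \<noteq> 0" using p(1) by (simp add: l_def hd_rev last_coeffs_eq_coeff_degree)
  ultimately have "l \<in> carrier (K[X]\<^bsub>CR\<^esub>)"
    by (simp add: univ_poly_def polynomial_def)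
  moreover have "CR.eval l z = 0" using p(3) by (simp add: eval_CR l_def)
  ultimately show ?thesis using CR.algebraicI[of l K z] ne by simp
qed

lemma CR_imp_alg:
  assumes "subring K CR" "(CR.algebraic over K) z" shows "z \<in> alg_closure K"
proof -
  obtain l where l: "l \<in> carrier (K[X]\<^bsub>CR\<^esub>)" "l \<noteq> []" "CR.eval l z = 0"
    using CR.algebraicE[OF assms(1) _ assms(2)] by auto
  have sl: "set l \<subseteq> K" and hd: "hd l \<noteq> 0" using l(1,2) by (auto simp: univ_poly_def polynomial_def)
  have z0: "0 \<in> K" using subringE(2)[OF assms(1)] by simp
  define p where "p = Poly (rev l)"
  have "p \<noteq> 0"
  proof
    assume "p = 0"
    then obtain n where n: "rev l = replicate n 0" by (auto simp: p_def Poly_eq_0)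
    have "last (rev l) = hd l" using l(2) by (simp add: last_rev)
    moreover have "last (rev l) = 0" using n l(2) by (cases n) auto
    ultimately show False using hd by simp
  qed
  moreover have "\<forall>i. Polynomial.coeff p i \<in> K"
    using sl z0 by (auto simp: p_def nth_default_def rev_nth intro!: subsetD[OF sl])
  moreover have "poly p z = 0" using l(3) by (simp add: eval_CR p_def)
  ultimately show ?thesis unfolding alg_closure_def by blast
qed

lemma alg_trans:
  assumes K: "is_subfield K" and L: "is_subfield L" and LK: "L \<subseteq> alg_closure K"
    and z: "z \<in> alg_closure L"
  shows "z \<in> alg_closure K"
proof -

  have sK: "subfield K CR" using imp_subfield[OF K] .
  have sL: "subfield L CR" using imp_subfield[OF L] .
  obtain p where p: "p \<noteq> 0" "\<forall>i. Polynomial.coeff p i \<in> L" "poly p z = 0"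
    using z unfolding alg_closure_def by blast
  define cs where "cs = coeffs p"
  have csL: "set cs \<subseteq> L" using p(2) by (auto simp: cs_def coeffs_def)
  have alg: "\<And>x. x \<in> set cs \<Longrightarrow> (CR.algebraic over K) x"
    using csL LK alg_imp_CR by blast
  define F where "F = CR.finite_extension K cs"
  have fd: "CR.finite_dimension K F"
    unfolding F_def using CR.finite_extension_finite_dimension(1)[OF sK _ alg] by simp
  have sF: "subfield F CR"
    unfolding F_def using CR.finite_extension_is_subfield[OF sK _ alg] by simp
  have csF: "set cs \<subseteq> F"
    unfolding F_def using CR.finite_extension_mem[OF subfieldE(1)[OF sK]] by simp
  have z0: "0 \<in> F" using subringE(2)[OF subfieldE(1)[OF sF]] by simp
  have "\<forall>i. Polynomial.coeff p i \<in> F"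
  proof
    fix i show "Polynomial.coeff p i \<in> F"
    proof (cases "Polynomial.coeff p i = 0")
      case False
      then have "Polynomial.coeff p i \<in> set cs" unfolding cs_def
        using coeff_in_coeffs[OF p(1) le_degree[OF False]] by simp
      then show ?thesis using csF by auto
    qed (use z0 in auto)
  qed
  then have "z \<in> alg_closure F" using p unfolding alg_closure_def by blast
  then have azF: "(CR.algebraic over F) z" by (rule alg_imp_CR)
  have fd2: "CR.finite_dimension F (CR.simple_extension F z)"
    using CR.finite_dimension_simple_extension[OF sF _] azF by simp
  have fd3: "CR.finite_dimension K (CR.simple_extension F z)"
    using CR.telescopic_base_dim(1)[OF sK sF fd fd2] .
  have sr: "subring (CR.simple_extension F z) CR"
    using CR.simple_extension_is_subring[OF subfieldE(1)[OF sF]] by simp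
  have zm: "z \<in> CR.simple_extension F z"
    using CR.simple_extension_mem[OF subfieldE(1)[OF sF]] by simp
  have "(CR.algebraic over K) z"
    using CR.finite_dimension_imp_algebraic[OF sK sr fd3 zm] .
  then show ?thesis using CR_imp_alg[OF subfieldE(1)[OF sK]] by blast
qed

lemma alg_closure_subfield:
  assumes K: "is_subfield K" shows "is_subfield (alg_closure K)"
proof -
  have sK: "subfield K CR" using imp_subfield[OF K] .
  have "alg_closure K = {x \<in> carrier CR. (CR.algebraic over K) x}"
    using alg_imp_CR CR_imp_alg[OF subfieldE(1)[OF sK]] by auto
  then show ?thesis
    using field.subfield_of_algebraics[OF field_CR sK] subfield_imp by metis
qed

subsection \<open>Generated fields\<close>

lemma UNIV_subfield: "is_subfield UNIV" by (simp add: is_subfield_def)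

lemma FG_sub: "is_subfield (field_gen S)"
  unfolding field_gen_def is_subfield_def by auto

lemma FG_incl: "S \<subseteq> field_gen S"
  unfolding field_gen_def by auto

lemma FG_min: "is_subfield K \<Longrightarrow> S \<subseteq> K \<Longrightarrow> field_gen S \<subseteq> K"
  unfolding field_gen_def by auto

lemma FG_mono: "S \<subseteq> T \<Longrightarrow> field_gen S \<subseteq> field_gen T"
  unfolding field_gen_def by auto

lemma alg_mono: "F \<subseteq> G \<Longrightarrow> alg_closure F \<subseteq> alg_closure G"
  unfolding alg_closure_def by blast

lemma sf_neg: "is_subfield K \<Longrightarrow> x \<in> K \<Longrightarrow> - x \<in> K"
  unfolding is_subfield_def by (metis diff_0)

lemma sf_add: "is_subfield K \<Longrightarrow> x \<in> K \<Longrightarrow> y \<in> K \<Longrightarrow> x + y \<in> K"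
  unfolding is_subfield_def by blast

lemma sf_mult: "is_subfield K \<Longrightarrow> x \<in> K \<Longrightarrow> y \<in> K \<Longrightarrow> x * y \<in> K"
  unfolding is_subfield_def by blast

lemma sf_inverse: "is_subfield K \<Longrightarrow> x \<in> K \<Longrightarrow> inverse x \<in> K"
  unfolding is_subfield_def by (cases "x = 0") auto

lemma sf_0: "is_subfield K \<Longrightarrow> 0 \<in> K" and sf_1: "is_subfield K \<Longrightarrow> 1 \<in> K"
  unfolding is_subfield_def by auto

lemma sf_divide: "is_subfield K \<Longrightarrow> x \<in> K \<Longrightarrow> y \<in> K \<Longrightarrow> x / y \<in> K"
  by (simp add: divide_inverse sf_mult sf_inverse)

lemma sf_power: "is_subfield K \<Longrightarrow> x \<in> K \<Longrightarrow> x ^ n \<in> K"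
  by (induction n) (auto intro: sf_mult sf_1)

lemma sf_of_nat: "is_subfield K \<Longrightarrow> of_nat n \<in> K"
  by (induction n) (auto intro: sf_add sf_0 sf_1)

lemma sf_of_int: "is_subfield K \<Longrightarrow> of_int n \<in> K"
proof (cases "n \<ge> 0")
  case True
  assume K: "is_subfield K"
  have "of_int n = (of_nat (nat n) :: complex)" using True by simp
  then show ?thesis using sf_of_nat[OF K] by simp
next
  case False
  assume K: "is_subfield K"
  have "of_int n = - (of_nat (nat (-n)) :: complex)" using False by simp
  then show ?thesis using sf_neg[OF K sf_of_nat[OF K]] by simp
qed

lemma sf_of_rat: "is_subfield K \<Longrightarrow> of_rat r \<in> K"
proof -
  assume K: "is_subfield K"
  obtain a b where "quotient_of r = (a, b)" by (cases "quotient_of r")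
  then have "r = of_int a / of_int b" by (rule quotient_of_div)
  then have "of_rat r = (of_int a / of_int b :: complex)" by (simp add: of_rat_divide)
  then show ?thesis using sf_divide[OF K sf_of_int[OF K] sf_of_int[OF K]] by simp
qed

lemma sf_sum: "is_subfield K \<Longrightarrow> (\<And>i. i \<in> I \<Longrightarrow> f i \<in> K) \<Longrightarrow> sum f I \<in> K"
  by (induction I rule: infinite_finite_induct) (auto intro: sf_add sf_0)

lemma sf_prod: "is_subfield K \<Longrightarrow> (\<And>i. i \<in> I \<Longrightarrow> f i \<in> K) \<Longrightarrow> prod f I \<in> K"
  by (induction I rule: infinite_finite_induct) (auto intro: sf_mult sf_1)

lemma alg_incl: "is_subfield F \<Longrightarrow> F \<subseteq> alg_closure F"
proof
  fix x assume F: "is_subfield F" and x: "x \<in> F"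
  have "\<forall>i. Polynomial.coeff [:-x, 1:] i \<in> F"
  proof
    fix i show "Polynomial.coeff [:-x, 1:] i \<in> F"
      using sf_neg[OF F x] sf_1[OF F] sf_0[OF F]
      by (cases i; cases "i - 1") (auto simp: coeff_pCons)
  qed
  moreover have "[:-x, 1:] \<noteq> 0" by simp
  moreover have "poly [:-x, 1:] x = 0" by simp
  ultimately show "x \<in> alg_closure F" unfolding alg_closure_def by blast
qed

lemma alg_ext:
  assumes "S \<subseteq> alg_closure (field_gen T)"
  shows "alg_closure (field_gen (T \<union> S)) \<subseteq> alg_closure (field_gen T)"
proof
  fix z assume z: "z \<in> alg_closure (field_gen (T \<union> S))"
  have A: "is_subfield (alg_closure (field_gen T))" by (rule alg_closure_subfield[OF FG_sub])
  have "T \<subseteq> alg_closure (field_gen T)" using FG_incl alg_incl[OF FG_sub] by blast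
  then have "field_gen (T \<union> S) \<subseteq> alg_closure (field_gen T)"
    using FG_min[OF A] assms by blast
  then show "z \<in> alg_closure (field_gen T)"
    using alg_trans[OF FG_sub FG_sub _ z] by blast
qed

lemma alg_closed:
  assumes F: "is_subfield F" and z: "z \<in> alg_closure (alg_closure F)"
  shows "z \<in> alg_closure F"
  using alg_trans[OF F alg_closure_subfield[OF F] _ z] by blast

lemma alg_root:
  assumes F: "is_subfield F" and q: "q > 0" and w: "y ^ q \<in> alg_closure F"
  shows "y \<in> alg_closure F"
proof -
  define A where "A = alg_closure F"
  have A: "is_subfield A" unfolding A_def by (rule alg_closure_subfield[OF F])
  define p where "p = Polynomial.monom 1 q - [:y ^ q:]"
  have "\<forall>i. Polynomial.coeff p i \<in> A"
  proof
    fix i show "Polynomial.coeff p i \<in> A"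
      using sf_neg[OF A w[folded A_def]] sf_1[OF A] sf_0[OF A] q
      by (cases i) (auto simp: p_def coeff_monom coeff_pCons split: nat.splits)
  qed
  moreover have "p \<noteq> 0"
  proof
    assume "p = 0"
    then have "Polynomial.coeff p q = 0" by simp
    then show False using q by (cases q) (auto simp: p_def coeff_monom)
  qed
  moreover have "poly p y = 0" by (simp add: p_def poly_monom)
  ultimately have "y \<in> alg_closure A" unfolding alg_closure_def by blast
  then show ?thesis using alg_closed[OF F] A_def by simp
qed

lemma alg_exp_rat:
  assumes F: "is_subfield F" and x: "exp x \<in> alg_closure F"
  shows "exp (of_rat r * x) \<in> alg_closure F"
proof -
  define A where "A = alg_closure F"
  have A: "is_subfield A" unfolding A_def by (rule alg_closure_subfield[OF F])
  obtain a b where ab: "quotient_of r = (a, b)" by (cases "quotient_of r")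
  then have r: "r = of_int a / of_int b" by (rule quotient_of_div)
  have b: "b > 0" using quotient_of_denom_pos[OF ab] .
  have "exp (of_rat r * x) ^ nat b = exp (of_nat (nat b) * (of_rat r * x))"
    by (simp add: exp_of_nat_mult)
  also have "of_nat (nat b) * (of_rat r * x) = of_int a * x"
    using b by (simp add: r of_rat_divide)
  finally have eq: "exp (of_rat r * x) ^ nat b = exp (of_int a * x)" .
  have "exp (of_int a * x) \<in> A"
  proof (cases "a \<ge> 0")
    case True
    then have "exp (of_int a * x) = exp (of_nat (nat a) * x)" by simp
    then show ?thesis using sf_power[OF A x[folded A_def]] by (simp add: exp_of_nat_mult)
  next
    case False
    then have "exp (of_int a * x) = exp (- (of_nat (nat (-a)) * x))" by simp
    also have "\<dots> = inverse (exp x ^ nat (-a))" by (simp add: exp_minus exp_of_nat_mult)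
    finally show ?thesis using sf_inverse[OF A sf_power[OF A x[folded A_def]]] by simp
  qed
  then show ?thesis using alg_root[OF F, of "nat b"] b eq A_def by simp
qed

lemma alg_algebraic:
  assumes F: "is_subfield F" and b: "algebraic b" shows "b \<in> alg_closure F"
proof -
  obtain p where p: "\<forall>i. Polynomial.coeff p i \<in> \<int>" "p \<noteq> 0" "poly p b = 0"
    using b unfolding algebraic_def by blast
  have "\<forall>i. Polynomial.coeff p i \<in> F"
    using p(1) sf_of_int[OF F] by (metis Ints_cases)
  then show ?thesis using p unfolding alg_closure_def by blast
qed

subsection \<open>Removing an element from a ladder\<close>

definition gens :: "complex \<Rightarrow> complex list \<Rightarrow> nat \<Rightarrow> complex set" where
  "gens lnb as k = {as ! i | i. i < k} \<union> {bpow lnb (as ! i) | i. i < k}"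

lemma ladder_field_gens: "ladder_field lnb as k = field_gen (gens lnb as k)"
  unfolding ladder_field_def gens_def ..

lemma gens_sub:
  assumes "\<And>i. i < j \<Longrightarrow> \<exists>i'. i' < j' \<and> as ! i = as' ! i'"
  shows "gens lnb as j \<subseteq> gens lnb as' j'"
proof
  fix x assume "x \<in> gens lnb as j"
  then obtain i where i: "i < j" "x = as ! i \<or> x = bpow lnb (as ! i)" unfolding gens_def by blast
  obtain i' where "i' < j'" "as ! i = as' ! i'" using assms[OF i(1)] by blast
  then show "x \<in> gens lnb as' j'" using i(2) unfolding gens_def by auto
qed

lemma gens_sub2:
  assumes "\<And>i. i < j \<Longrightarrow> as ! i = y \<or> (\<exists>i'. i' < j' \<and> as ! i = as' ! i')"
  shows "gens lnb as j \<subseteq> gens lnb as' j' \<union> {y, bpow lnb y}"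
proof
  fix x assume "x \<in> gens lnb as j"
  then obtain i where i: "i < j" "x = as ! i \<or> x = bpow lnb (as ! i)" unfolding gens_def by blast
  from assms[OF i(1)] show "x \<in> gens lnb as' j' \<union> {y, bpow lnb y}"
  proof
    assume "as ! i = y" then show ?thesis using i(2) by auto
  next
    assume "\<exists>i'. i' < j' \<and> as ! i = as' ! i'"
    then obtain i' where "i' < j'" "as ! i = as' ! i'" by blast
    then show ?thesis using i(2) unfolding gens_def by auto
  qed
qed

lemma remove_ladder:
  assumes L: "ladder_to lnb as \<xi>" and k: "k < length as"
    and ak: "as ! k \<in> alg_closure (ladder_field lnb as k)"
    and bk: "bpow lnb (as ! k) \<in> alg_closure (ladder_field lnb as k)"
  shows "ladder_to lnb (take k as @ drop (Suc k) as) \<xi>"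
proof -
  define as' where "as' = take k as @ drop (Suc k) as"
  have len: "length as' = length as - 1" using k by (simp add: as'_def)
  have nth: "\<And>i. i < length as' \<Longrightarrow> as' ! i = (if i < k then as ! i else as ! Suc i)"
    using k by (auto simp: as'_def nth_append min_def)
  have g1: "gens lnb as' j = gens lnb as j" if j: "j \<le> k" for j
  proof -
    have *: "\<And>i. i < j \<Longrightarrow> as' ! i = as ! i" using nth j k len by auto
    show ?thesis
    proof
      show "gens lnb as' j \<subseteq> gens lnb as j"
        by (rule gens_sub) (use * in auto)
      show "gens lnb as j \<subseteq> gens lnb as' j"
        by (rule gens_sub) (use * in auto)
    qed
  qed
  have g2: "gens lnb as k \<subseteq> gens lnb as' j" if j: "k \<le> j" "j \<le> length as'" for j
  proof -
    have *: "\<And>i. i < k \<Longrightarrow> as ! i = as' ! i" using nth j k len by auto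
    show ?thesis
    proof (rule gens_sub)
      fix i assume "i < k" then show "\<exists>i'. i' < j \<and> as ! i = as' ! i'"
        using * j by (intro exI[of _ i]) auto
    qed
  qed
  have g3: "gens lnb as (Suc j) \<subseteq> gens lnb as' j \<union> {as ! k, bpow lnb (as ! k)}"
    if j: "k \<le> j" "j \<le> length as'" for j
  proof (rule gens_sub2)
    fix i assume i: "i < Suc j"
    show "as ! i = as ! k \<or> (\<exists>i'. i' < j \<and> as ! i = as' ! i')"
    proof (cases "i < k")
      case True
      then have "as ! i = as' ! i" "i < j" using nth[of i] j len k by auto
      then show ?thesis by blast
    next
      case False
      show ?thesis
      proof (cases "i = k")
        case False
        define i' where "i' = i - 1"
        have "i = Suc i'" "k \<le> i'" "i' < j" using False \<open>\<not> i < k\<close> i by (auto simp: i'_def)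
        then have "as ! i = as' ! i'" using nth[of i'] j len k by auto
        then show ?thesis using \<open>i' < j\<close> by blast
      qed simp
    qed
  qed
  have key: "alg_closure (ladder_field lnb as (Suc j)) \<subseteq> alg_closure (ladder_field lnb as' j)"
    if j: "k \<le> j" "j \<le> length as'" for j
  proof -
    define S where "S = {as ! k, bpow lnb (as ! k)}"
    have "S \<subseteq> alg_closure (field_gen (gens lnb as' j))"
      using ak bk alg_mono[OF FG_mono[OF g2[OF j]]] unfolding S_def ladder_field_gens by blast
    then have "alg_closure (field_gen (gens lnb as' j \<union> S)) \<subseteq> alg_closure (field_gen (gens lnb as' j))"
      by (rule alg_ext)
    moreover have "alg_closure (ladder_field lnb as (Suc j)) \<subseteq> alg_closure (field_gen (gens lnb as' j \<union> S))"
      unfolding ladder_field_gens S_def by (rule alg_mono[OF FG_mono[OF g3[OF j]]])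
    ultimately show ?thesis unfolding ladder_field_gens by blast
  qed
  have lad: "is_ladder lnb as" and xi: "\<xi> \<in> alg_closure (ladder_field lnb as (length as))"
    using L unfolding ladder_to_def by auto
  have "is_ladder lnb as'"
    unfolding is_ladder_def
  proof (intro allI impI)
    fix j assume j: "j < length as'"
    show "as' ! j \<in> alg_closure (ladder_field lnb as' j) \<or>
          bpow lnb (as' ! j) \<in> alg_closure (ladder_field lnb as' j)"
    proof (cases "j < k")
      case True
      then have "as' ! j = as ! j" "ladder_field lnb as' j = ladder_field lnb as j"
        using nth[OF j] g1[of j] by (auto simp: ladder_field_gens)
      moreover have "j < length as" using j len by simp
      ultimately show ?thesis using lad unfolding is_ladder_def by metis
    next
      case False
      then have "as' ! j = as ! Suc j" using nth[OF j] by simp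
      moreover have "Suc j < length as" using j len by simp
      moreover have "alg_closure (ladder_field lnb as (Suc j)) \<subseteq> alg_closure (ladder_field lnb as' j)"
        using key False j by simp
      ultimately show ?thesis using lad unfolding is_ladder_def by (metis subsetD)
    qed
  qed
  moreover have "\<xi> \<in> alg_closure (ladder_field lnb as' (length as'))"
  proof -
    have "length as = Suc (length as')" using len k by simp
    then show ?thesis using xi key[of "length as'"] len k by auto
  qed
  ultimately show ?thesis unfolding ladder_to_def as'_def by simp
qed

lemma dependent_step:
  assumes "\<not> one_lin_indep_Q as"
  shows "\<exists>k < length as. \<exists>d0 d. as ! k = of_rat d0 + (\<Sum>i<k. of_rat (d i) * as ! i)"
proof -
  define n where "n = length as"
  obtain c0 c where rel: "of_rat c0 + (\<Sum>i<n. of_rat (c i) * as ! i) = (0::complex)"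
    and nz: "\<not> (c0 = 0 \<and> (\<forall>i<n. c i = 0))"
    using assms unfolding one_lin_indep_Q_def n_def by blast
  define I where "I = {i. i < n \<and> c i \<noteq> 0}"
  have "I \<noteq> {}"
  proof
    assume "I = {}"
    then have "\<forall>i<n. c i = 0" by (auto simp: I_def)
    then have "(\<Sum>i<n. of_rat (c i) * as ! i) = (0::complex)" by simp
    then have "c0 = 0" using rel by simp
    then show False using nz \<open>\<forall>i<n. c i = 0\<close> by blast
  qed
  have fin: "finite I" by (simp add: I_def)
  define k where "k = Max I"
  have kI: "k \<in> I" using Max_in[OF fin \<open>I \<noteq> {}\<close>] k_def by simp
  then have kn: "k < n" and ck: "c k \<noteq> 0" by (auto simp: I_def)
  have above: "c i = 0" if "k < i" "i < n" for i
  proof (rule ccontr)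
    assume "c i \<noteq> 0"
    then have "i \<in> I" using that by (simp add: I_def)
    then have "i \<le> k" using Max_ge[OF fin] k_def by simp
    then show False using that by simp
  qed
  define f where "f i = of_rat (c i) * as ! i" for i
  have "(\<Sum>i<n. f i) = (\<Sum>i<Suc k. f i)"
    by (rule sum.mono_neutral_right) (use kn above in \<open>auto simp: f_def\<close>)
  also have "\<dots> = (\<Sum>i<k. f i) + of_rat (c k) * as ! k" by (simp add: f_def)
  finally have rel2: "of_rat c0 + (\<Sum>i<k. f i) + of_rat (c k) * as ! k = 0"
    using rel by (simp add: f_def add.assoc)
  have ck': "(of_rat (c k) :: complex) \<noteq> 0" using ck by simp
  define sk where "sk = (\<Sum>i<k. f i)"
  have e: "of_rat (c k) * as ! k = - (of_rat c0 + sk)"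
    using rel2 unfolding sk_def by (metis add.commute eq_neg_iff_add_eq_0)
  have ak: "as ! k = - (of_rat c0 + sk) / of_rat (c k)"
    using e ck' by (simp add: eq_divide_eq mult.commute)
  define d0 where "d0 = - c0 / c k"
  define d where "d i = - c i / c k" for i
  have "(\<Sum>i<k. of_rat (d i) * as ! i) = (\<Sum>i<k. - f i / of_rat (c k))"
    by (rule sum.cong) (auto simp: d_def f_def of_rat_minus of_rat_divide)
  also have "\<dots> = (\<Sum>i<k. - f i) / of_rat (c k)"
    by (rule sum_divide_distrib[symmetric])
  also have "\<dots> = - sk / of_rat (c k)"
    by (simp only: sum_negf sk_def)
  finally have hs: "(\<Sum>i<k. of_rat (d i) * as ! i) = - sk / of_rat (c k)" .
  have hd: "(of_rat d0 :: complex) = - of_rat c0 / of_rat (c k)"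
    by (simp add: d0_def of_rat_minus of_rat_divide)
  have "- (of_rat c0 + sk) / of_rat (c k) = - of_rat c0 / of_rat (c k) + - sk / of_rat (c k)"
    by (simp only: minus_add_distrib add_divide_distrib)
  then have "as ! k = of_rat d0 + (\<Sum>i<k. of_rat (d i) * as ! i)"
    using ak hs hd by simp
  then show ?thesis using kn n_def by blast
qed

lemma remove_ok:
  assumes b: "algebraic b" and lnb: "exp lnb = b" and k: "k < length as"
    and ak: "as ! k = of_rat d0 + (\<Sum>i<k. of_rat (d i) * as ! i)"
  shows "as ! k \<in> alg_closure (ladder_field lnb as k)"
    and "bpow lnb (as ! k) \<in> alg_closure (ladder_field lnb as k)"
proof -
  define F where "F = ladder_field lnb as k"
  have F: "is_subfield F" unfolding F_def ladder_field_gens by (rule FG_sub)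
  define A where "A = alg_closure F"
  have A: "is_subfield A" unfolding A_def by (rule alg_closure_subfield[OF F])
  have FA: "F \<subseteq> A" unfolding A_def by (rule alg_incl[OF F])
  have G: "gens lnb as k \<subseteq> F" unfolding F_def ladder_field_gens by (rule FG_incl)
  have ai: "as ! i \<in> F" if "i < k" for i
  proof -
    have "as ! i \<in> gens lnb as k" using that unfolding gens_def by blast
    then show ?thesis using G by blast
  qed
  have bi: "bpow lnb (as ! i) \<in> F" if "i < k" for i
  proof -
    have "bpow lnb (as ! i) \<in> gens lnb as k" using that unfolding gens_def by blast
    then show ?thesis using G by blast
  qed
  have "(\<Sum>i<k. of_rat (d i) * as ! i) \<in> F"
  proof (rule sf_sum[OF F])
    fix i assume "i \<in> {..<k}"
    then show "of_rat (d i) * as ! i \<in> F" using sf_mult[OF F sf_of_rat[OF F] ai] by simp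
  qed
  then have "as ! k \<in> F"
    unfolding ak by (rule sf_add[OF F sf_of_rat[OF F]])
  then show "as ! k \<in> alg_closure (ladder_field lnb as k)" using FA A_def F_def by auto
  have eb: "exp lnb \<in> A" unfolding A_def lnb by (rule alg_algebraic[OF F b])
  have "as ! k * lnb = of_rat d0 * lnb + (\<Sum>i<k. of_rat (d i) * (as ! i * lnb))"
  proof -
    have "(\<Sum>i<k. of_rat (d i) * as ! i) * lnb = (\<Sum>i<k. of_rat (d i) * (as ! i * lnb))"
      by (simp add: sum_distrib_right mult.assoc)
    then show ?thesis unfolding ak by (simp add: distrib_right)
  qed
  then have "bpow lnb (as ! k) = exp (of_rat d0 * lnb) * (\<Prod>i<k. exp (of_rat (d i) * (as ! i * lnb)))"
    by (simp add: bpow_def exp_add exp_sum)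
  moreover have "exp (of_rat d0 * lnb) \<in> A"
    using alg_exp_rat[OF F eb[unfolded A_def]] A_def by simp
  moreover have "(\<Prod>i<k. exp (of_rat (d i) * (as ! i * lnb))) \<in> A"
  proof (rule sf_prod[OF A])
    fix i assume "i \<in> {..<k}"
    then have "exp (as ! i * lnb) \<in> A" using bi FA by (auto simp: bpow_def)
    then show "exp (of_rat (d i) * (as ! i * lnb)) \<in> A" using alg_exp_rat[OF F] A_def by simp
  qed
  ultimately have "bpow lnb (as ! k) \<in> A" using sf_mult[OF A] by simp
  then show "bpow lnb (as ! k) \<in> alg_closure (ladder_field lnb as k)"
    using A_def F_def by simp
qed

lemma subseq_remove: "k < length as \<Longrightarrow> subseq (take k as @ drop (Suc k) as) as"
proof -
  assume k: "k < length as"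
  have "as = take k as @ (as ! k) # drop (Suc k) as" using id_take_nth_drop[OF k] .
  moreover have "subseq (take k as @ drop (Suc k) as) (take k as @ (as ! k) # drop (Suc k) as)"
    by (simp add: subseq_append' list_emb.list_emb_Cons)
  ultimately show ?thesis by simp
qed

theorem lemma11p3:
  fixes b lnb \<xi> :: complex and as :: "complex list"
  assumes "algebraic b" and "b \<noteq> 0" and "b \<noteq> 1" and "exp lnb = b"
    and "ladder_to lnb as \<xi>"
  shows "\<exists>as'. subseq as' as \<and> ladder_to lnb as' \<xi> \<and> one_lin_indep_Q as'"
proof -
  have main: "\<And>as. length as = n \<Longrightarrow> ladder_to lnb as \<xi> \<Longrightarrow>
      \<exists>as'. subseq as' as \<and> ladder_to lnb as' \<xi> \<and> one_lin_indep_Q as'" for n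
  proof (induction n rule: less_induct)
    case (less n)
    fix as assume len: "length as = n" and L: "ladder_to lnb as \<xi>"
    show "\<exists>as'. subseq as' as \<and> ladder_to lnb as' \<xi> \<and> one_lin_indep_Q as'"
    proof (cases "one_lin_indep_Q as")
      case True
      then show ?thesis using L by blast
    next
      case False
      obtain k d0 d where k: "k < length as" and ak: "as ! k = of_rat d0 + (\<Sum>i<k. of_rat (d i) * as ! i)"
        using dependent_step[OF False] by blast
      define as'' where "as'' = take k as @ drop (Suc k) as"
      have L'': "ladder_to lnb as'' \<xi>"
        unfolding as''_def
        by (rule remove_ladder[OF L k remove_ok(1)[OF assms(1,4) k ak] remove_ok(2)[OF assms(1,4) k ak]])
      have "length as'' < n" using k len by (simp add: as''_def)
      then obtain as' where "subseq as' as''" "ladder_to lnb as' \<xi>" "one_lin_indep_Q as'"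
        using less.IH L'' by blast
      moreover have "subseq as'' as" unfolding as''_def by (rule subseq_remove[OF k])
      ultimately show ?thesis using subseq_order.order_trans by blast
    qed
  qed
  show ?thesis using main[OF refl assms(5)] .
qed

end
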